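(* Let $x_1,\dots,x_n$ be fixed data points and let $s$ be a real-valued function of $n$ arguments that is symmetric under permutations of its arguments. Let $I_1,\dots,I_n$ be i.i.d. uniform on $\{1,\dots,n\}$ (a bootstrap resample), set $X_i^*=x_{I_i}$, $s^*=s(X_1^*,\dots,X_n^* )$ and $w_j^*=\#\{i: I_i=j\}$ for $j=1,\dots,n$. Write $\mathbb{E}_*,\mathrm{Var}_*,\mathrm{Cov}_*$ for expectation, variance and covariance with respect to this resampling distribution, and let $e_j=\mathbb{E}_*[s^*\mid I_1=j]$ and $s_0=\mathbb{E}_*[s^*]$. Let $l^*$ be the orthogonal projection (in $L^2$ of the resampling distribution) of $s^*-s_0$ onto the linear span of $w_1^*,\dots,w_n^*$. Then: (1) $\mathbb{E}_*[s^*w_j^*]=e_j$ for every $j$; (2) $l^*=\sum_{j=1}^n w_j^*\beta_j$ with $\beta_j=e_j-s_0$; (3) $\mathrm{Var}_*(l^* )=\mathrm{JK}_\mathrm{B}=\mathrm{IJ}_\mathrm{B}$, where $\mathrm{JK}_\mathrm{B}=\sum_{j=1}^n(e_j-s_0)^2$ and $\mathrm{IJ}_\mathrm{B}=\sum_{j=1}^n\mathrm{Cov}_*^2(s^*,w_j^* )$.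
   Context: The bootstrap resample is drawn conditionally on the data, so all starred quantities are computed with $x_1,\dots,x_n$ held fixed; $w^*=(w_1^*,\dots,w_n^* )$ is Multinomial$(n;1/n,\dots,1/n)$. *)

theory Defs
  imports "HOL-Probability.Probability" "HOL-Combinatorics.Permutations"
begin

text \<open>Bootstrap resampling, 0-based indices: data points x 0, ..., x (n-1);
  a resample is I : {..<n} -> {..<n} (extensional), drawn uniformly, i.e.
  I 0, ..., I (n-1) i.i.d. uniform on {..<n}.\<close>

definition boot_space :: "nat \<Rightarrow> (nat \<Rightarrow> nat) set" where
  "boot_space n = PiE {..<n} (\<lambda>_. {..<n})"

definition boot_pmf :: "nat \<Rightarrow> (nat \<Rightarrow> nat) pmf" where
  "boot_pmf n = pmf_of_set (boot_space n)"

definition bootE :: "nat \<Rightarrow> ((nat \<Rightarrow> nat) \<Rightarrow> real) \<Rightarrow> real" where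
  "bootE n f = measure_pmf.expectation (boot_pmf n) f"

definition bootVar :: "nat \<Rightarrow> ((nat \<Rightarrow> nat) \<Rightarrow> real) \<Rightarrow> real" where
  "bootVar n f = measure_pmf.variance (boot_pmf n) f"

definition bootCov :: "nat \<Rightarrow> ((nat \<Rightarrow> nat) \<Rightarrow> real) \<Rightarrow> ((nat \<Rightarrow> nat) \<Rightarrow> real) \<Rightarrow> real" where
  "bootCov n f g = bootE n (\<lambda>I. (f I - bootE n f) * (g I - bootE n g))"

text \<open>Elementary conditional expectation E_*[f | I_1 = j] (I_1 is index 0 here)\<close>
definition bootE_first :: "nat \<Rightarrow> ((nat \<Rightarrow> nat) \<Rightarrow> real) \<Rightarrow> nat \<Rightarrow> real" where
  "bootE_first n f j =
     measure_pmf.expectation (pmf_of_set {I \<in> boot_space n. I 0 = j}) f"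

definition wcount :: "nat \<Rightarrow> nat \<Rightarrow> (nat \<Rightarrow> nat) \<Rightarrow> real" where
  "wcount n j I = real (card {i \<in> {..<n}. I i = j})"

definition sstar :: "nat \<Rightarrow> ('a list \<Rightarrow> real) \<Rightarrow> (nat \<Rightarrow> 'a) \<Rightarrow> (nat \<Rightarrow> nat) \<Rightarrow> real" where
  "sstar n s x I = s (map (\<lambda>i. x (I i)) [0..<n])"

definition symmetric_stat :: "nat \<Rightarrow> ('a list \<Rightarrow> real) \<Rightarrow> bool" where
  "symmetric_stat n s \<longleftrightarrow>
     (\<forall>p ys. p permutes {..<n} \<longrightarrow> length ys = n \<longrightarrow> s (permute_list p ys) = s ys)"

definition is_boot_proj :: "nat \<Rightarrow> ((nat \<Rightarrow> nat) \<Rightarrow> real) \<Rightarrow> ((nat \<Rightarrow> nat) \<Rightarrow> real) \<Rightarrow> bool" where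
  "is_boot_proj n f l \<longleftrightarrow>
     (\<exists>c. \<forall>I \<in> boot_space n. l I = (\<Sum>j<n. c j * wcount n j I)) \<and>
     (\<forall>j<n. bootE n (\<lambda>I. (f I - l I) * wcount n j I) = 0)"

end

theory Submission imports Defs begin

abbreviation "Om n \<equiv> boot_space n"

lemma fin_Om: "finite (boot_space n)"
  unfolding boot_space_def by (simp add: finite_PiE)

lemma ne_Om: "boot_space n \<noteq> {}"
  unfolding boot_space_def by (auto simp: PiE_eq_empty_iff)

lemma bootE_sum: "bootE n f = (\<Sum>I\<in>boot_space n. f I) / real n ^ n"
proof -
  have "card (boot_space n) = n ^ n" unfolding boot_space_def by (simp add: card_PiE)
  then show ?thesis unfolding bootE_def boot_pmf_def
    by (simp add: integral_pmf_of_set[OF ne_Om fin_Om])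
qed

lemma card_fix:
  assumes "K \<subseteq> {..<n}" "\<And>k. k \<in> K \<Longrightarrow> v k < n"
  shows "card {I \<in> boot_space n. \<forall>k\<in>K. I k = v k} = n ^ (n - card K)"
proof -
  have "{I \<in> boot_space n. \<forall>k\<in>K. I k = v k} = PiE {..<n} (\<lambda>k. if k \<in> K then {v k} else {..<n})"
    using assms unfolding boot_space_def by (auto simp: PiE_iff extensional_def split: if_splits; force)
  moreover have "card (PiE {..<n} (\<lambda>k. if k \<in> K then {v k} else {..<n})) = n ^ (n - card K)"
  proof -
    have "card (PiE {..<n} (\<lambda>k. if k \<in> K then {v k} else {..<n})) = (\<Prod>k<n. if k \<in> K then 1 else n)"
      by (simp add: card_PiE if_distrib cong: if_cong)
    also have "\<dots> = n ^ card ({..<n} - K)"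
      by (simp add: prod.If_cases Diff_eq)
    also have "card ({..<n} - K) = n - card K"
      using assms(1) by (simp add: card_Diff_subset finite_subset)
    finally show ?thesis .
  qed
  ultimately show ?thesis by simp
qed

lemma bootE_first_sum:
  assumes "j < n"
  shows "bootE_first n f j = (\<Sum>I\<in>boot_space n. if I 0 = j then f I else 0) / real n ^ (n - 1)"
proof -
  have c: "card {I \<in> boot_space n. I 0 = j} = n ^ (n - 1)"
    using card_fix[of "{0}" n "\<lambda>_. j"] assms by simp
  have "{I \<in> boot_space n. I 0 = j} \<noteq> {}" using c assms by (metis card.empty power_eq_0_iff less_nat_zero_code) 
  moreover have "finite {I \<in> boot_space n. I 0 = j}" using fin_Om by simp
  ultimately show ?thesis unfolding bootE_first_def
    by (simp add: integral_pmf_of_set c sum.inter_filter[OF fin_Om])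
qed

lemma wcount_sum: "wcount n j I = (\<Sum>i<n. if I i = j then 1 else 0)"
  unfolding wcount_def by (simp add: sum.If_cases Int_def lessThan_def)


lemma cnt1:
  assumes "i < n" "j < n"
  shows "(\<Sum>I\<in>boot_space n. if I i = j then 1 else 0::real) = real n ^ (n - 1)"
proof -
  have "card {I \<in> boot_space n. I i = j} = n ^ (n - 1)"
    using card_fix[of "{i}" n "\<lambda>_. j"] assms by simp
  then show ?thesis by (simp add: sum.If_cases[OF fin_Om] Int_def)
qed

lemma cnt2:
  assumes "i < n" "i' < n" "i \<noteq> i'" "j < n" "k < n"
  shows "(\<Sum>I\<in>boot_space n. if I i = j \<and> I i' = k then 1 else 0::real) = real n ^ (n - 2)"
proof -
  have "{I \<in> boot_space n. \<forall>m\<in>{i,i'}. I m = (if m = i then j else k)} = {I \<in> boot_space n. I i = j \<and> I i' = k}"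
    using assms by auto
  moreover have "card {I \<in> boot_space n. \<forall>m\<in>{i,i'}. I m = (if m = i then j else k)} = n ^ (n - 2)"
    using card_fix[of "{i,i'}" n "\<lambda>m. if m = i then j else k"] assms by simp
  ultimately have "card {I \<in> boot_space n. I i = j \<and> I i' = k} = n ^ (n - 2)" by simp
  then show ?thesis by (simp add: sum.If_cases[OF fin_Om] Int_def)
qed

lemma sum_w:
  assumes "j < n"
  shows "(\<Sum>I\<in>boot_space n. wcount n j I) = real n ^ n"
proof -
  have "(\<Sum>I\<in>boot_space n. wcount n j I) = (\<Sum>i<n. \<Sum>I\<in>boot_space n. if I i = j then 1 else 0::real)"
    by (simp add: wcount_sum sum.swap[of _ "boot_space n"])
  also have "\<dots> = (\<Sum>i<n. real n ^ (n - 1))" using cnt1 assms by simp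
  also have "\<dots> = real n ^ n" using assms by (simp add: power_eq_if)
  finally show ?thesis .
qed

lemma sum_ww:
  assumes "j < n" "k < n"
  shows "(\<Sum>I\<in>boot_space n. wcount n j I * wcount n k I)
       = real n ^ (n - 1) * (real n * (if j = k then 1 else 0) + (real n - 1))"
proof -
  have "(\<Sum>I\<in>boot_space n. wcount n j I * wcount n k I)
      = (\<Sum>i<n. \<Sum>i'<n. \<Sum>I\<in>boot_space n. if I i = j \<and> I i' = k then 1 else 0::real)"
  proof -
    have "\<And>I. wcount n j I * wcount n k I = (\<Sum>i<n. \<Sum>i'<n. if I i = j \<and> I i' = k then 1 else 0::real)"
      unfolding wcount_sum sum_product by (intro sum.cong refl) auto
    then have "(\<Sum>I\<in>boot_space n. wcount n j I * wcount n k I)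
       = (\<Sum>I\<in>boot_space n. \<Sum>i<n. \<Sum>i'<n. if I i = j \<and> I i' = k then 1 else 0::real)" by simp
    also have "\<dots> = (\<Sum>i<n. \<Sum>I\<in>boot_space n. \<Sum>i'<n. if I i = j \<and> I i' = k then 1 else 0::real)"
      by (rule sum.swap)
    also have "\<dots> = (\<Sum>i<n. \<Sum>i'<n. \<Sum>I\<in>boot_space n. if I i = j \<and> I i' = k then 1 else 0::real)"
      by (intro sum.cong refl sum.swap)
    finally show ?thesis .
  qed
  also have "\<dots> = (\<Sum>i<n. \<Sum>i'<n. if i' = i then (if j = k then real n ^ (n - 1) else 0) else real n ^ (n - 2))"
  proof (intro sum.cong refl)
    fix i i' assume "i \<in> {..<n}" "i' \<in> {..<n}"
    then show "(\<Sum>I\<in>boot_space n. if I i = j \<and> I i' = k then 1 else 0::real) =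
      (if i' = i then (if j = k then real n ^ (n - 1) else 0) else real n ^ (n - 2))"
      using cnt1[of i n j] cnt2[of i n i' j k] assms by (cases "i' = i") (auto cong: conj_cong)
  qed
  also have "\<dots> = (\<Sum>i<n. (if j = k then real n ^ (n - 1) else 0) + (real n - 1) * real n ^ (n - 2))"
  proof (intro sum.cong refl)
    fix i assume i: "i \<in> {..<n}"
    have "{..<n} \<inter> {i'. i' = i} = {i}" "card ({..<n} \<inter> - {i'. i' = i}) = n - 1"
      using i by (auto simp: Compl_eq_Diff_UNIV Int_Diff[symmetric])
    then show "(\<Sum>i'<n. if i' = i then (if j = k then real n ^ (n - 1) else 0) else real n ^ (n - 2)) =
      (if j = k then real n ^ (n - 1) else 0) + (real n - 1) * real n ^ (n - 2)"
      using i by (simp add: sum.If_cases of_nat_diff)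
  qed
  also have "\<dots> = real n ^ (n - 1) * (real n * (if j = k then 1 else 0) + (real n - 1))"
  proof (cases "n \<ge> 2")
    case True
    then have "n - 1 = Suc (n - 2)" by simp
    then have "real n ^ (n - 1) = real n * real n ^ (n - 2)"
      by simp
    then show ?thesis by (simp add: algebra_simps)
  next
    case False
    then have "n = 1" using assms by linarith
    then show ?thesis by simp
  qed
  finally show ?thesis .
qed


lemma sym_sum:
  assumes sym: "symmetric_stat n s" and i: "i < n"
  shows "(\<Sum>I\<in>boot_space n. if I i = j then sstar n s x I else 0)
       = (\<Sum>I\<in>boot_space n. if I 0 = j then sstar n s x I else 0)"
proof -
  define t where "t = Transposition.transpose 0 i"
  have tp: "t permutes {..<n}" unfolding t_def using i by (intro permutes_swap_id) auto
  have tlt: "k < n \<Longrightarrow> t k < n" for k unfolding t_def using i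
    by (auto simp: Transposition.transpose_def)
  have tt: "t (t k) = k" for k unfolding t_def by simp
  define h where "h I = (\<lambda>k. if k < n then I (t k) else undefined)" for I :: "nat \<Rightarrow> nat"
  have hO: "h I \<in> boot_space n" if "I \<in> boot_space n" for I
    using that tlt unfolding h_def boot_space_def by (auto simp: PiE_iff extensional_def)
  have hh: "h (h I) = I" if "I \<in> boot_space n" for I
    using that tlt tt unfolding h_def boot_space_def by (auto simp: PiE_iff extensional_def fun_eq_iff)
  have sh: "sstar n s x (h I) = sstar n s x I" for I
  proof -
    let ?ys = "map (\<lambda>k. x (I k)) [0..<n]"
    have "permute_list t ?ys = map (\<lambda>k. x (I (t k))) [0..<n]"
      unfolding permute_list_def using tlt by (intro map_cong) auto
    moreover have "map (\<lambda>k. x (h I k)) [0..<n] = map (\<lambda>k. x (I (t k))) [0..<n]"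
      unfolding h_def by (intro map_cong) auto
    moreover have "s (permute_list t ?ys) = s ?ys"
      using sym tp unfolding symmetric_stat_def by simp
    ultimately show ?thesis unfolding sstar_def by metis
  qed
  have h0: "h I 0 = I i" for I unfolding h_def t_def using i by simp
  show ?thesis
    by (rule sum.reindex_bij_witness[where i=h and j=h]) (auto simp: hO hh sh h0)
qed


lemma sum_lw:
  assumes "k < n"
  shows "(\<Sum>I\<in>boot_space n. (\<Sum>j<n. c j * wcount n j I) * wcount n k I)
     = real n ^ (n - 1) * (real n * c k + (real n - 1) * (\<Sum>j<n. c j))"
proof -
  have "(\<Sum>I\<in>boot_space n. (\<Sum>j<n. c j * wcount n j I) * wcount n k I)
     = (\<Sum>j<n. c j * (\<Sum>I\<in>boot_space n. wcount n j I * wcount n k I))"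
    by (simp add: sum_distrib_left sum_distrib_right sum.swap[of _ "boot_space n"] mult.assoc)
  also have "\<dots> = (\<Sum>j<n. c j * (real n ^ (n - 1) * (real n * (if j = k then 1 else 0) + (real n - 1))))"
    using assms by (intro sum.cong refl) (simp add: sum_ww)
  also have "\<dots> = (\<Sum>j<n. real n ^ (n - 1) * real n * (if j = k then c j else 0)
          + real n ^ (n - 1) * (real n - 1) * c j)"
    by (intro sum.cong refl) (simp add: algebra_simps)
  also have "\<dots> = real n ^ (n - 1) * (real n * c k + (real n - 1) * (\<Sum>j<n. c j))"
  proof -
    have "(\<Sum>j<n. real n ^ (n - 1) * real n * (if j = k then c j else 0)) = real n ^ (n - 1) * real n * c k"
      using assms by (subst sum_distrib_left[symmetric]) simp
    moreover have "(\<Sum>j<n. real n ^ (n - 1) * (real n - 1) * c j) = real n ^ (n - 1) * (real n - 1) * (\<Sum>j<n. c j)"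
      by (simp add: sum_distrib_left)
    ultimately show ?thesis by (simp only: sum.distrib) (simp add: algebra_simps)
  qed
  finally show ?thesis .
qed

lemma sw_sum:
  assumes "symmetric_stat n s" "j < n"
  shows "(\<Sum>I\<in>boot_space n. sstar n s x I * wcount n j I)
       = real n * (\<Sum>I\<in>boot_space n. if I 0 = j then sstar n s x I else 0)"
proof -
  have "(\<Sum>I\<in>boot_space n. sstar n s x I * wcount n j I)
      = (\<Sum>I\<in>boot_space n. \<Sum>i<n. if I i = j then sstar n s x I else 0)"
    by (intro sum.cong refl) (simp add: wcount_sum sum_distrib_left if_distrib cong: if_cong)
  also have "\<dots> = (\<Sum>i<n. \<Sum>I\<in>boot_space n. if I i = j then sstar n s x I else 0)"
    by (rule sum.swap)
  also have "\<dots> = (\<Sum>i<n. \<Sum>I\<in>boot_space n. if I 0 = j then sstar n s x I else 0)"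
    using assms by (intro sum.cong refl sym_sum) auto
  finally show ?thesis by simp
qed

lemma sumT:
  assumes "n \<ge> 1" shows "(\<Sum>j<n. \<Sum>I\<in>boot_space n. if I 0 = j then f I else 0) = (\<Sum>I\<in>boot_space n. f I)"
proof -
  have "(\<Sum>j<n. \<Sum>I\<in>boot_space n. if I 0 = j then f I else 0)
      = (\<Sum>I\<in>boot_space n. \<Sum>j<n. if I 0 = j then f I else 0)" by (rule sum.swap)
  also have "\<dots> = (\<Sum>I\<in>boot_space n. f I)"
  proof (intro sum.cong refl)
    fix I assume "I \<in> boot_space n"
    then have "I 0 < n" using assms PiE_mem[of I "{..<n}" "\<lambda>_. {..<n}" 0] unfolding boot_space_def by simp
    then show "(\<Sum>j<n. if I 0 = j then f I else 0) = f I"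
      by (simp add: sum.delta)
  qed
  finally show ?thesis .
qed


theorem theorem1:
  fixes n :: nat and x :: "nat \<Rightarrow> 'a" and s :: "'a list \<Rightarrow> real"
  assumes "n \<ge> 1"
    and "symmetric_stat n s"
  defines "e \<equiv> \<lambda>j. bootE_first n (sstar n s x) j"
    and "s0 \<equiv> bootE n (sstar n s x)"
  shows "(\<forall>j<n. bootE n (\<lambda>I. sstar n s x I * wcount n j I) = e j)
    \<and> (\<exists>l. is_boot_proj n (\<lambda>I. sstar n s x I - s0) l)
    \<and> (\<forall>l. is_boot_proj n (\<lambda>I. sstar n s x I - s0) l \<longrightarrow>
          (\<forall>I \<in> boot_space n. l I = (\<Sum>j<n. wcount n j I * (e j - s0)))
          \<and> bootVar n l = (\<Sum>j<n. (e j - s0)\<^sup>2)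
          \<and> (\<Sum>j<n. (e j - s0)\<^sup>2) = (\<Sum>j<n. (bootCov n (sstar n s x) (wcount n j))\<^sup>2))"
proof -
  define M where "M = real n ^ (n - 1)"
  define N where "N = real n ^ n"
  define S where "S = sstar n s x"
  define T where "T j = (\<Sum>I\<in>boot_space n. if I 0 = j then S I else 0)" for j
  define \<beta> where "\<beta> j = e j - s0" for j
  have n0: "real n > 0" using assms(1) by simp
  have M0: "M > 0" unfolding M_def using n0 by simp
  have NM: "N = real n * M" unfolding N_def M_def using assms(1)
    by (metis Suc_diff_le diff_Suc_1 power_Suc)
  have N0: "N > 0" using NM M0 n0 by simp
  have eT: "e j = T j / M" if "j < n" for j
    unfolding e_def T_def M_def S_def using bootE_first_sum[OF that] by simp
  have s0S: "s0 = (\<Sum>I\<in>boot_space n. S I) / N"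
    unfolding s0_def S_def N_def by (simp add: bootE_sum)
  have SW: "(\<Sum>I\<in>boot_space n. S I * wcount n j I) = real n * T j" if "j < n" for j
    unfolding S_def T_def using sw_sum[OF assms(2) that] by simp
  have part1: "bootE n (\<lambda>I. S I * wcount n j I) = e j" if "j < n" for j
    using SW[OF that] eT[OF that] NM M0 n0 unfolding bootE_sum N_def[symmetric] by (simp add: field_simps)
  have sumT': "(\<Sum>j<n. T j) = (\<Sum>I\<in>boot_space n. S I)" unfolding T_def by (rule sumT[OF assms(1)])
  have sumbeta: "(\<Sum>j<n. \<beta> j) = 0"
  proof -
    have "(\<Sum>j<n. e j) = (\<Sum>j<n. T j) / M" using eT by (simp add: sum_divide_distrib)
    also have "\<dots> = real n * s0" using s0S sumT' NM M0 n0 by (simp add: field_simps)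
    finally show ?thesis unfolding \<beta>_def by (simp add: sum_subtractf)
  qed
  have Fk: "(\<Sum>I\<in>boot_space n. (S I - s0) * wcount n k I) = N * \<beta> k" if "k < n" for k
  proof -
    have "(\<Sum>I\<in>boot_space n. (S I - s0) * wcount n k I)
        = (\<Sum>I\<in>boot_space n. S I * wcount n k I) - s0 * (\<Sum>I\<in>boot_space n. wcount n k I)"
      by (simp add: algebra_simps sum_subtractf sum_distrib_left)
    also have "\<dots> = N * \<beta> k" using SW[OF that] sum_w[OF that] eT[OF that] NM M0
      unfolding \<beta>_def N_def[symmetric] by (simp add: field_simps)
    finally show ?thesis .
  qed
  have key: "(\<Sum>I\<in>boot_space n. (S I - s0 - l I) * wcount n k I)
      = N * \<beta> k - M * (real n * c k + (real n - 1) * (\<Sum>j<n. c j))"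
    if "k < n" "\<forall>I\<in>boot_space n. l I = (\<Sum>j<n. c j * wcount n j I)" for k l c
  proof -
    have "(\<Sum>I\<in>boot_space n. (S I - s0 - l I) * wcount n k I)
      = (\<Sum>I\<in>boot_space n. (S I - s0) * wcount n k I - (\<Sum>j<n. c j * wcount n j I) * wcount n k I)"
      using that(2) by (intro sum.cong refl) (simp add: algebra_simps)
    also have "\<dots> = N * \<beta> k - M * (real n * c k + (real n - 1) * (\<Sum>j<n. c j))"
      using Fk[OF that(1)] sum_lw[OF that(1), of c] unfolding M_def by (simp add: sum_subtractf)
    finally show ?thesis .
  qed
  define l0 where "l0 I = (\<Sum>j<n. \<beta> j * wcount n j I)" for I
  have ex: "is_boot_proj n (\<lambda>I. S I - s0) l0"
    unfolding is_boot_proj_def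
  proof (intro conjI exI[of _ \<beta>] allI impI ballI)
    fix I show "l0 I = (\<Sum>j<n. \<beta> j * wcount n j I)" by (simp add: l0_def)
  next
    fix k assume k: "k < n"
    have "(\<Sum>I\<in>boot_space n. (S I - s0 - l0 I) * wcount n k I) = 0"
      using key[OF k, of l0 \<beta>] NM sumbeta by (simp add: l0_def)
    then show "bootE n (\<lambda>I. (S I - s0 - l0 I) * wcount n k I) = 0" by (simp add: bootE_sum)
  qed
  have uniq: "\<forall>I\<in>boot_space n. l I = (\<Sum>j<n. wcount n j I * \<beta> j)"
    and var: "bootVar n l = (\<Sum>j<n. (\<beta> j)\<^sup>2)"
    if "is_boot_proj n (\<lambda>I. S I - s0) l" for l
  proof -
    from that obtain c where c: "\<forall>I\<in>boot_space n. l I = (\<Sum>j<n. c j * wcount n j I)"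
      and orth: "\<forall>j<n. bootE n (\<lambda>I. (S I - s0 - l I) * wcount n j I) = 0"
      unfolding is_boot_proj_def by auto
    have eq: "N * \<beta> k = M * (real n * c k + (real n - 1) * (\<Sum>j<n. c j))" if "k < n" for k
      using orth key[OF that c] that N0 by (simp add: bootE_sum N_def)
    have eq2: "real n * \<beta> k = real n * c k + (real n - 1) * (\<Sum>j<n. c j)" if "k < n" for k
      using eq[OF that] NM M0 by (simp add: mult.assoc)
    have "(\<Sum>k<n. real n * \<beta> k) = (\<Sum>k<n. real n * c k + (real n - 1) * (\<Sum>j<n. c j))"
      using eq2 by simp
    then have "0 = real n * (\<Sum>j<n. c j) + real n * (real n - 1) * (\<Sum>j<n. c j)"
      using sumbeta by (simp add: sum.distrib sum_distrib_left[symmetric])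
    then have "real n * real n * (\<Sum>j<n. c j) = 0" by (simp add: algebra_simps)
    then have C0: "(\<Sum>j<n. c j) = 0" using n0 by simp
    have cb: "c k = \<beta> k" if "k < n" for k using eq2[OF that] C0 n0 by simp
    show u: "\<forall>I\<in>boot_space n. l I = (\<Sum>j<n. wcount n j I * \<beta> j)"
      using c cb by (simp add: mult.commute)
    have El: "bootE n l = 0"
    proof -
      have "(\<Sum>I\<in>boot_space n. l I) = (\<Sum>I\<in>boot_space n. \<Sum>j<n. \<beta> j * wcount n j I)"
        using u by (intro sum.cong refl) (simp add: mult.commute)
      also have "\<dots> = (\<Sum>j<n. \<beta> j * (\<Sum>I\<in>boot_space n. wcount n j I))"
        by (simp add: sum.swap[of _ "boot_space n"] sum_distrib_left)
      also have "\<dots> = (\<Sum>j<n. \<beta> j) * N"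
        using sum_w unfolding N_def by (simp add: sum_distrib_right)
      finally show ?thesis using sumbeta by (simp add: bootE_sum)
    qed
    have "(\<Sum>I\<in>boot_space n. (l I)\<^sup>2) = (\<Sum>I\<in>boot_space n. \<Sum>k<n. \<beta> k * ((\<Sum>j<n. \<beta> j * wcount n j I) * wcount n k I))"
      using u by (intro sum.cong refl) (simp add: power2_eq_square sum_distrib_left sum_distrib_right mult.commute mult.left_commute)
    also have "\<dots> = (\<Sum>k<n. \<beta> k * (\<Sum>I\<in>boot_space n. (\<Sum>j<n. \<beta> j * wcount n j I) * wcount n k I))"
      by (simp add: sum.swap[of _ "boot_space n"] sum_distrib_left)
    also have "\<dots> = (\<Sum>k<n. \<beta> k * (M * (real n * \<beta> k)))"
      using sum_lw sumbeta unfolding M_def by (intro sum.cong refl) simp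
    also have "\<dots> = N * (\<Sum>k<n. (\<beta> k)\<^sup>2)"
      using NM by (simp add: sum_distrib_left power2_eq_square mult_ac)
    finally have "(\<Sum>I\<in>boot_space n. (l I)\<^sup>2) = N * (\<Sum>k<n. (\<beta> k)\<^sup>2)" .
    then show "bootVar n l = (\<Sum>j<n. (\<beta> j)\<^sup>2)"
    proof -
      have "bootVar n l = bootE n (\<lambda>I. (l I - bootE n l)\<^sup>2)"
        unfolding bootVar_def bootE_def by simp
      also have "\<dots> = bootE n (\<lambda>I. (l I)\<^sup>2)" using El by simp
      also have "\<dots> = (\<Sum>j<n. (\<beta> j)\<^sup>2)"
        unfolding bootE_sum N_def[symmetric] using \<open>(\<Sum>I\<in>boot_space n. (l I)\<^sup>2) = N * _\<close> N0 by simp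
      finally show ?thesis .
    qed
  qed
  have cov: "bootCov n S (wcount n j) = \<beta> j" if "j < n" for j
  proof -
    have Ew: "bootE n (wcount n j) = 1" using sum_w[OF that] n0 by (simp add: bootE_sum)
    have "(\<Sum>I\<in>boot_space n. (S I - s0) * (wcount n j I - 1))
       = (\<Sum>I\<in>boot_space n. (S I - s0) * wcount n j I) - (\<Sum>I\<in>boot_space n. S I) + N * s0"
    proof -
      have cO: "card (boot_space n) = n ^ n" unfolding boot_space_def by (simp add: card_PiE)
      have "(\<Sum>I\<in>boot_space n. (S I - s0) * (wcount n j I - 1))
        = (\<Sum>I\<in>boot_space n. (S I - s0) * wcount n j I - S I + s0)"
        by (intro sum.cong refl) (simp add: algebra_simps)
      also have "\<dots> = (\<Sum>I\<in>boot_space n. (S I - s0) * wcount n j I) - (\<Sum>I\<in>boot_space n. S I) + (\<Sum>I\<in>boot_space n. s0)"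
        by (simp only: sum.distrib sum_subtractf)
      finally show ?thesis using cO by (simp add: N_def)
    qed
    also have "\<dots> = N * \<beta> j" using Fk[OF that] s0S N0 by simp
    finally have X: "(\<Sum>I\<in>boot_space n. (S I - s0) * (wcount n j I - 1)) = N * \<beta> j" .
    have "bootCov n S (wcount n j) = bootE n (\<lambda>I. (S I - s0) * (wcount n j I - 1))"
      unfolding bootCov_def Ew s0_def S_def by simp
    also have "\<dots> = \<beta> j" unfolding bootE_sum N_def[symmetric] X using N0 by simp
    finally show ?thesis .
  qed
  show ?thesis
    using part1 ex uniq var cov
    unfolding S_def[symmetric] \<beta>_def[symmetric]
    by (auto simp: \<beta>_def)
qed

end
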